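(* Let $n\ge 3$ and $k\ge 1$, and let $H\in\mathcal{H}_k$. Then \[ \Gamma_{\rm S}(C_n,H)=kn+\left\lceil \frac{n}{3}\right\rceil . \]
   Context: $C_n$ is the cycle on $n$ vertices; $\gamma$ is the domination number. For $k\ge 1$, $\mathcal{H}_k$ is the class of all finite graphs $H$ with the following two properties: (a) $\gamma(H)=k+1$ and $\gamma(H-v)=k$ for every vertex $v\in V(H)$; (b) for all $x,y\in V(H)$ (where $x=y$ is allowed) there exists a minimum dominating set of $H$ containing both $x$ and $y$. For graphs $G,H$ and a function $f\colon V(G)\to V(H)$, the Sierpiński product $G\otimes_f H$ is the graph with vertex set $V(G)\times V(H)$ and edges of two types: (type 1) $(g,h)(g,h')$ for every $g\in V(G)$ and every edge $hh'\in E(H)$; (type 2) $(g,f(g'))(g',f(g))$ for every edge $gg'\in E(G)$. $\Gamma_{\rm S}(G,H)=\max_{f}\gamma(G\otimes_f H)$ over all functions $f\colon V(G)\to V(H)$. *)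

theory Defs
  imports Complex_Main "HOL-Library.FuncSet"
begin

type_synonym 'a graph = "'a set \<times> ('a \<Rightarrow> 'a \<Rightarrow> bool)"

definition verts :: "'a graph \<Rightarrow> 'a set" where "verts G = fst G"
definition adj :: "'a graph \<Rightarrow> 'a \<Rightarrow> 'a \<Rightarrow> bool" where "adj G = snd G"

definition simple_graph :: "'a graph \<Rightarrow> bool" where
  "simple_graph G \<longleftrightarrow> finite (verts G)
     \<and> (\<forall>u v. adj G u v \<longrightarrow> u \<in> verts G \<and> v \<in> verts G)
     \<and> (\<forall>u v. adj G u v \<longrightarrow> adj G v u)
     \<and> (\<forall>u. \<not> adj G u u)"

definition dominating_set :: "'a graph \<Rightarrow> 'a set \<Rightarrow> bool" where
  "dominating_set G D \<longleftrightarrow> D \<subseteq> verts G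
     \<and> (\<forall>v\<in>verts G. v \<in> D \<or> (\<exists>u\<in>D. adj G u v))"

definition domination_number :: "'a graph \<Rightarrow> nat" where
  "domination_number G = (LEAST m. \<exists>D. dominating_set G D \<and> card D = m)"

definition min_dominating_set :: "'a graph \<Rightarrow> 'a set \<Rightarrow> bool" where
  "min_dominating_set G D \<longleftrightarrow> dominating_set G D \<and> card D = domination_number G"

definition delete_vertex :: "'a graph \<Rightarrow> 'a \<Rightarrow> 'a graph" where
  "delete_vertex G v = (verts G - {v}, \<lambda>x y. adj G x y \<and> x \<noteq> v \<and> y \<noteq> v)"

definition cycle_graph :: "nat \<Rightarrow> nat graph" where
  "cycle_graph n = ({0..<n}, \<lambda>i j. i < n \<and> j < n \<and> (j = (i + 1) mod n \<or> i = (j + 1) mod n))"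

definition class_H :: "nat \<Rightarrow> 'a graph \<Rightarrow> bool" where
  "class_H k H \<longleftrightarrow> simple_graph H
     \<and> domination_number H = k + 1
     \<and> (\<forall>v\<in>verts H. domination_number (delete_vertex H v) = k)
     \<and> (\<forall>x\<in>verts H. \<forall>y\<in>verts H. \<exists>D. min_dominating_set H D \<and> x \<in> D \<and> y \<in> D)"

definition sierpinski_product :: "'a graph \<Rightarrow> 'b graph \<Rightarrow> ('a \<Rightarrow> 'b) \<Rightarrow> ('a \<times> 'b) graph" where
  "sierpinski_product G H f =
     (verts G \<times> verts H,
      \<lambda>x y. (fst x = fst y \<and> fst x \<in> verts G \<and> adj H (snd x) (snd y))
          \<or> (adj G (fst x) (fst y) \<and> snd x = f (fst y) \<and> snd y = f (fst x)))"

definition Gamma_S :: "'a graph \<Rightarrow> 'b graph \<Rightarrow> nat" where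
  "Gamma_S G H = Max ((\<lambda>f. domination_number (sierpinski_product G H f)) ` (verts G \<rightarrow>\<^sub>E verts H))"

end

theory Submission
  imports Defs
begin

lemma ceil3: "nat \<lceil>real n / 3\<rceil> = (n + 2) div 3"
proof -
  define q where "q = (n+2) div 3"
  have h: "n + 2 = 3*q + (n+2) mod 3" "(n+2) mod 3 < 3" unfolding q_def by auto
  have "\<lceil>real n / 3\<rceil> = int q"
  proof (subst ceiling_eq_iff)
    have a: "real n + 2 = 3 * real q + real ((n+2) mod 3)" using h(1) by (metis of_nat_add of_nat_mult of_nat_numeral)
    have b: "real ((n+2) mod 3) \<le> 2" using h(2) by simp
    show "real_of_int (int q) - 1 < real n / 3 \<and> real n / 3 \<le> real_of_int (int q)"
      using a b by (simp add: field_simps)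
  qed
  thus ?thesis unfolding q_def by simp
qed

lemma card3: "card {g. g < n \<and> g mod 3 = (0::nat)} = (n + 2) div 3"
proof (induction n)
  case 0 then show ?case by simp
next
  case (Suc n)
  have e: "{g. g < Suc n \<and> g mod 3 = 0} = {g. g < n \<and> g mod 3 = 0} \<union> (if n mod 3 = 0 then {n} else {})"
    by (cases "n mod 3 = 0") (auto simp: less_Suc_eq)
  show ?case
  proof (cases "n mod 3 = 0")
    case True
    then have "card {g. g < Suc n \<and> g mod 3 = 0} = Suc (card {g. g < n \<and> g mod 3 = 0})"
      using e by simp
    then show ?thesis using Suc True by presburger
  next
    case False
    then have "card {g. g < Suc n \<and> g mod 3 = 0} = card {g. g < n \<and> g mod 3 = 0}"
      using e by simp
    then show ?thesis using Suc False by presburger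
  qed
qed

lemma dom_le:
  assumes "finite (verts G)" "dominating_set G D"
  shows "domination_number G \<le> card D"
  unfolding domination_number_def by (rule Least_le) (use assms in blast)

lemma dom_ex:
  assumes "finite (verts G)"
  shows "\<exists>D. dominating_set G D \<and> card D = domination_number G"
proof -
  have "dominating_set G (verts G)" unfolding dominating_set_def by auto
  then show ?thesis unfolding domination_number_def
    using LeastI_ex[of "\<lambda>m. \<exists>D. dominating_set G D \<and> card D = m"] by blast
qed

lemma verts_cyc[simp]: "verts (cycle_graph n) = {0..<n}" by (simp add: verts_def cycle_graph_def)
lemma adj_cyc[simp]: "adj (cycle_graph n) i j = (i < n \<and> j < n \<and> (j = (i + 1) mod n \<or> i = (j + 1) mod n))"
  by (simp add: adj_def cycle_graph_def)
lemma verts_sp[simp]: "verts (sierpinski_product G H f) = verts G \<times> verts H" by (simp add: verts_def sierpinski_product_def)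
lemma adj_sp[simp]: "adj (sierpinski_product G H f) x y =
  ((fst x = fst y \<and> fst x \<in> verts G \<and> adj H (snd x) (snd y))
          \<or> (adj G (fst x) (fst y) \<and> snd x = f (fst y) \<and> snd y = f (fst x)))"
  by (simp add: adj_def sierpinski_product_def)
lemma verts_del[simp]: "verts (delete_vertex H v) = verts H - {v}" by (simp add: verts_def delete_vertex_def)
lemma adj_del[simp]: "adj (delete_vertex H v) x y = (adj H x y \<and> x \<noteq> v \<and> y \<noteq> v)" by (simp add: adj_def delete_vertex_def)

lemma back_mod: "g < (n::nat) \<Longrightarrow> t = (g + 1) mod n \<Longrightarrow> g = (t + n - 1) mod n"
proof (cases "g + 1 < n")
  case False
  assume "t = (g + 1) mod n" "g < n"
  with False have e: "g + 1 = n" by auto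
  with \<open>t = (g + 1) mod n\<close> have "t = 0" by simp
  moreover have "n - 1 = g" using e by simp
  ultimately show ?thesis using \<open>g < n\<close> by simp
qed auto

lemma cyc_cover:
  assumes "T \<subseteq> {..<n}" "\<forall>g<n. g \<in> T \<or> (\<exists>t\<in>T. adj (cycle_graph n) t g)"
  shows "n \<le> 3 * card T"
proof -
  have fT: "finite T" using assms(1) finite_subset by blast
  have "{..<n} \<subseteq> (\<Union>t\<in>T. {t, (t+1) mod n, (t + n - 1) mod n})"
  proof
    fix g assume "g \<in> {..<n}"
    then have g: "g < n" by simp
    then consider "g \<in> T" | t where "t \<in> T" "g = (t + 1) mod n \<or> t = (g+1) mod n"
      using assms(2) by auto
    then show "g \<in> (\<Union>t\<in>T. {t, (t+1) mod n, (t + n - 1) mod n})"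
    proof cases
      case 1 then show ?thesis by blast
    next
      case 2 then show ?thesis using back_mod[OF g] by blast
    qed
  qed
  then have "card {..<n} \<le> card (\<Union>t\<in>T. {t, (t+1) mod n, (t + n - 1) mod n})"
    by (intro card_mono) (auto simp: fT)
  also have "\<dots> \<le> (\<Sum>t\<in>T. card {t, (t+1) mod n, (t + n - 1) mod n})" by (rule card_UN_le[OF fT])
  also have "\<dots> \<le> (\<Sum>t\<in>T. 3)"
    by (intro sum_mono) (simp add: card_insert_if)
  finally show ?thesis by simp
qed

lemma lower:
  assumes H: "class_H k H" and c: "c \<in> verts H"
  shows "k * n + (n + 2) div 3 \<le> domination_number (sierpinski_product (cycle_graph n) H (restrict (\<lambda>_. c) {0..<n}))"
    (is "_ \<le> domination_number ?P")
proof -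
  let ?f = "restrict (\<lambda>_. c) {0..<n}"
  have sg: "simple_graph H" and gH: "domination_number H = k + 1"
    and gD: "domination_number (delete_vertex H c) = k"
    using H c unfolding class_H_def by auto
  have finH: "finite (verts H)" and adjH: "\<And>u v. adj H u v \<Longrightarrow> u \<in> verts H \<and> v \<in> verts H"
    using sg unfolding simple_graph_def by auto
  have finP: "finite (verts ?P)" using finH by simp
  obtain D where D: "dominating_set ?P D" "card D = domination_number ?P"
    using dom_ex[OF finP] by blast
  define Dg where "Dg g = {h. (g,h) \<in> D}" for g
  have Dsub: "D \<subseteq> {0..<n} \<times> verts H" using D(1) unfolding dominating_set_def by simp
  have Deq: "D = Sigma {..<n} Dg" using Dsub unfolding Dg_def by auto
  have finDg: "finite (Dg g)" for g
    by (rule finite_subset[OF _ finH]) (use Dsub in \<open>auto simp: Dg_def\<close>)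
  have DgH: "Dg g \<subseteq> verts H" for g using Dsub by (auto simp: Dg_def)
  have cardD: "card D = (\<Sum>g<n. card (Dg g))"
    unfolding Deq by (rule card_SigmaI) (auto simp: finDg)
  define T where "T = {g\<in>{..<n}. k + 1 \<le> card (Dg g)}"
  have dom: "v \<in> Dg g \<or> (\<exists>u\<in>Dg g. adj H u v)" if g: "g < n" and v: "v \<in> verts H" "v \<noteq> c" for g v
  proof -
    have "(g,v) \<in> verts ?P" using g v by simp
    then have "(g,v) \<in> D \<or> (\<exists>u\<in>D. adj ?P u (g,v))" using D(1) unfolding dominating_set_def by blast
    then show ?thesis
    proof
      assume "(g,v) \<in> D" then show ?thesis by (simp add: Dg_def)
    next
      assume "\<exists>u\<in>D. adj ?P u (g,v)"
      then obtain a b where ab: "(a,b) \<in> D" "adj ?P (a,b) (g,v)" by auto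
      then have "(a = g \<and> adj H b v) \<or> (a < n \<and> v = c)" by auto
      then show ?thesis using ab(1) v(2) by (auto simp: Dg_def)
    qed
  qed
  have heavy: "g \<in> T" if g: "g < n" and cg: "c \<in> Dg g" for g
  proof -
    have "dominating_set H (Dg g)" unfolding dominating_set_def
      using DgH dom[OF g] cg by blast
    then have "k + 1 \<le> card (Dg g)" using dom_le[OF finH] gH by metis
    then show ?thesis using g by (simp add: T_def)
  qed
  have key: "k \<le> card (Dg g) \<and> (g \<in> T \<or> (\<exists>t\<in>T. adj (cycle_graph n) t g))" if g: "g < n" for g
  proof (cases "c \<in> Dg g \<or> (\<exists>u\<in>Dg g. adj H u c)")
    case True
    then have "dominating_set H (Dg g)" unfolding dominating_set_def
      using DgH dom[OF g] by blast
    then have "k + 1 \<le> card (Dg g)" using dom_le[OF finH] gH by metis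
    then show ?thesis using g by (simp add: T_def)
  next
    case False
    have "dominating_set (delete_vertex H c) (Dg g)" unfolding dominating_set_def
      using DgH dom[OF g] False by fastforce
    then have k: "k \<le> card (Dg g)" using dom_le[of "delete_vertex H c"] finH gD by auto
    have "(g,c) \<in> verts ?P" using g c by simp
    then have "(g,c) \<in> D \<or> (\<exists>u\<in>D. adj ?P u (g,c))" using D(1) unfolding dominating_set_def by blast
    moreover have "(g,c) \<notin> D" using False by (simp add: Dg_def)
    ultimately obtain a b where ab: "(a,b) \<in> D" "adj ?P (a,b) (g,c)" by auto
    then have "(a = g \<and> adj H b c) \<or> (adj (cycle_graph n) a g \<and> b = c)" by auto
    then have "adj (cycle_graph n) a g \<and> b = c" using False ab(1) by (auto simp: Dg_def)
    moreover then have "a \<in> T" using heavy ab(1) by (auto simp: Dg_def)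
    ultimately show ?thesis using k by blast
  qed
  have "n \<le> 3 * card T" by (rule cyc_cover) (use key in \<open>auto simp: T_def\<close>)
  then have c3: "(n + 2) div 3 \<le> card T" by linarith
  have "(\<Sum>g<n. k + (if g \<in> T then 1 else 0)) \<le> (\<Sum>g<n. card (Dg g))"
    by (rule sum_mono) (use key in \<open>auto simp: T_def\<close>)
  moreover have "(\<Sum>g<n. k + (if g \<in> T then 1 else 0)) = k * n + card T"
  proof -
    have "T \<subseteq> {..<n}" by (auto simp: T_def)
    then have "(\<Sum>g<n. (if g \<in> T then 1 else 0::nat)) = card T"
      by (simp add: sum.If_cases Int_absorb1)
    then show ?thesis by (simp add: sum.distrib)
  qed
  ultimately show ?thesis using cardD D(2) c3 by linarith
qed

lemma pfacts:
  fixes g n :: nat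
  assumes g: "g < n" and g3: "g mod 3 \<noteq> 0" and n: "n \<ge> 3"
  defines "p \<equiv> (if g mod 3 = 1 then g - 1 else (g+1) mod n)"
  shows "p < n \<and> p mod 3 = 0 \<and> (g = (p + n - 1) mod n \<or> g = (p + 1) mod n) \<and> adj (cycle_graph n) p g"
proof (cases "g mod 3 = 1")
  case True
  then have "p = g - 1" "g \<ge> 1" by (auto simp: p_def)
  moreover have "(g - 1) mod 3 = 0" using True by presburger
  ultimately show ?thesis using g True by auto
next
  case False
  then have m2: "g mod 3 = 2" using g3 by presburger
  show ?thesis
  proof (cases "g + 1 < n")
    case True
    then have "p = g + 1" using False by (simp add: p_def)
    then show ?thesis using True g m2 by auto presburger+
  next
    case F2: False
    then have e: "g + 1 = n" using g by simp
    then have "p = 0" using False by (simp add: p_def)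
    moreover have "n - 1 = g" using e by simp
    ultimately show ?thesis using g e by auto
  qed
qed

lemma upper:
  assumes H: "class_H k H" and n: "n \<ge> 3" and f: "f \<in> {0..<n} \<rightarrow>\<^sub>E verts H"
  shows "domination_number (sierpinski_product (cycle_graph n) H f) \<le> k * n + (n + 2) div 3"
    (is "domination_number ?P \<le> _")
proof -
  have sg: "simple_graph H" and gH: "domination_number H = k + 1"
    and gD: "\<And>v. v \<in> verts H \<Longrightarrow> domination_number (delete_vertex H v) = k"
    and pairs: "\<And>x y. x \<in> verts H \<Longrightarrow> y \<in> verts H \<Longrightarrow> \<exists>D. min_dominating_set H D \<and> x \<in> D \<and> y \<in> D"
    using H unfolding class_H_def by auto
  have finH: "finite (verts H)" using sg unfolding simple_graph_def by auto
  have fv: "\<And>g. g < n \<Longrightarrow> f g \<in> verts H" using f by auto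
  define S where "S = {g. g < n \<and> g mod 3 = (0::nat)}"
  define p where "p g = (if g mod 3 = 1 then g - 1 else (g+1) mod n)" for g
  have "\<forall>g\<in>S. \<exists>A. min_dominating_set H A \<and> f ((g+n-1) mod n) \<in> A \<and> f ((g+1) mod n) \<in> A"
  proof
    fix g assume "g \<in> S"
    have "(g+n-1) mod n < n" "(g+1) mod n < n" using n by auto
    then show "\<exists>A. min_dominating_set H A \<and> f ((g+n-1) mod n) \<in> A \<and> f ((g+1) mod n) \<in> A"
      using pairs fv by blast
  qed
  then obtain A where A: "\<And>g. g \<in> S \<Longrightarrow> min_dominating_set H (A g) \<and> f ((g+n-1) mod n) \<in> A g \<and> f ((g+1) mod n) \<in> A g"
    by metis
  have "\<forall>g\<in>{..<n}. \<exists>B. dominating_set (delete_vertex H (f (p g))) B \<and> card B = k"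
  proof
    fix g assume "g \<in> {..<n}"
    then have "p g < n" by (auto simp: p_def)
    then have "f (p g) \<in> verts H" by (rule fv)
    then show "\<exists>B. dominating_set (delete_vertex H (f (p g))) B \<and> card B = k"
      using dom_ex[of "delete_vertex H (f (p g))"] finH gD by auto
  qed
  then obtain B where B: "\<And>g. g < n \<Longrightarrow> dominating_set (delete_vertex H (f (p g))) (B g) \<and> card (B g) = k"
    by (metis lessThan_iff)
  define E where "E g = (if g \<in> S then A g else B g)" for g
  define D where "D = Sigma {..<n} E"
  have EH: "E g \<subseteq> verts H" if "g < n" for g
    using A[of g] B[OF that] unfolding E_def min_dominating_set_def dominating_set_def by auto
  have cardE: "card (E g) = k + (if g \<in> S then 1 else 0)" if "g < n" for g
    using A[of g] B[OF that] gH unfolding E_def min_dominating_set_def by auto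
  have "card D = (\<Sum>g<n. card (E g))"
    unfolding D_def by (rule card_SigmaI) (auto intro: finite_subset[OF EH finH])
  also have "\<dots> = (\<Sum>g<n. k + (if g \<in> S then 1 else 0))" by (rule sum.cong) (auto simp: cardE)
  also have "\<dots> = k * n + card S"
  proof -
    have "S \<subseteq> {..<n}" by (auto simp: S_def)
    then have "(\<Sum>g<n. (if g \<in> S then 1 else 0::nat)) = card S"
      by (simp add: sum.If_cases Int_absorb1)
    then show ?thesis by (simp add: sum.distrib)
  qed
  also have "card S = (n + 2) div 3" unfolding S_def by (rule card3)
  finally have cardD: "card D = k * n + (n + 2) div 3" .
  have "dominating_set ?P D"
    unfolding dominating_set_def
  proof (intro conjI ballI)
    show "D \<subseteq> verts ?P" using EH by (auto simp: D_def)
  next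
    fix x assume "x \<in> verts ?P"
    then obtain g v where x: "x = (g,v)" "g < n" "v \<in> verts H" by auto
    show "x \<in> D \<or> (\<exists>u\<in>D. adj ?P u x)"
    proof (cases "g \<in> S")
      case True
      then have "dominating_set H (A g)" using A unfolding min_dominating_set_def by blast
      then have "v \<in> A g \<or> (\<exists>u\<in>A g. adj H u v)" using x unfolding dominating_set_def by blast
      then show ?thesis
      proof
        assume "v \<in> A g" then show ?thesis using x True by (simp add: D_def E_def)
      next
        assume "\<exists>u\<in>A g. adj H u v"
        then obtain u where u: "u \<in> A g" "adj H u v" by blast
        then have "(g,u) \<in> D" using x True by (simp add: D_def E_def)
        moreover have "adj ?P (g,u) x" using x u by simp
        ultimately show ?thesis by blast
      qed
    next
      case False
      then have g3: "g mod 3 \<noteq> 0" using x by (simp add: S_def)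
      have pf: "p g < n \<and> p g mod 3 = 0 \<and> (g = (p g + n - 1) mod n \<or> g = (p g + 1) mod n) \<and> adj (cycle_graph n) (p g) g"
        using pfacts[OF x(2) g3 n] unfolding p_def by simp
      show ?thesis
      proof (cases "v = f (p g)")
        case True
        have pS: "p g \<in> S" using pf by (simp add: S_def)
        then have "f g \<in> A (p g)" using A[OF pS] pf by metis
        then have "(p g, f g) \<in> D" using pS pf by (simp add: D_def E_def)
        moreover have "adj ?P (p g, f g) x" using x True pf by simp
        ultimately show ?thesis by blast
      next
        case vne: False
        have "dominating_set (delete_vertex H (f (p g))) (B g)" using B[OF x(2)] by blast
        then have "v \<in> B g \<or> (\<exists>u\<in>B g. adj H u v)" using x vne unfolding dominating_set_def by auto
        then show ?thesis
        proof
          assume "v \<in> B g" then show ?thesis using x False by (simp add: D_def E_def)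
        next
          assume "\<exists>u\<in>B g. adj H u v"
          then obtain u where u: "u \<in> B g" "adj H u v" by blast
          then have "(g,u) \<in> D" using x False by (simp add: D_def E_def)
          moreover have "adj ?P (g,u) x" using x u by simp
          ultimately show ?thesis by blast
        qed
      qed
    qed
  qed
  then show ?thesis using dom_le[of ?P D] finH cardD by simp
qed

theorem theorem3p5:
  fixes n k :: nat and H :: "'a graph"
  assumes "n \<ge> 3" and "k \<ge> 1" and "class_H k H"
  shows "Gamma_S (cycle_graph n) H = k * n + nat \<lceil>real n / 3\<rceil>"
proof -
  have sg: "simple_graph H" and gH: "domination_number H = k + 1"
    using assms(3) unfolding class_H_def by auto
  have finH: "finite (verts H)" using sg unfolding simple_graph_def by auto
  have "verts H \<noteq> {}"
  proof
    assume "verts H = {}"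
    then have "dominating_set H {}" unfolding dominating_set_def by auto
    then show False using dom_le[OF finH] gH by fastforce
  qed
  then obtain c where c: "c \<in> verts H" by blast
  let ?F = "(\<lambda>f. domination_number (sierpinski_product (cycle_graph n) H f)) ` ({0..<n} \<rightarrow>\<^sub>E verts H)"
  have "Max ?F = k * n + (n + 2) div 3"
  proof (rule Max_eqI)
    show "finite ?F" using finH by (intro finite_imageI finite_PiE) auto
  next
    fix y assume "y \<in> ?F"
    then show "y \<le> k * n + (n + 2) div 3" using upper[OF assms(3,1)] by auto
  next
    have r: "restrict (\<lambda>_. c) {0..<n} \<in> {0..<n} \<rightarrow>\<^sub>E verts H" using c by auto
    have "domination_number (sierpinski_product (cycle_graph n) H (restrict (\<lambda>_. c) {0..<n})) = k * n + (n + 2) div 3"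
      using lower[OF assms(3) c, of n] upper[OF assms(3,1) r] by linarith
    then show "k * n + (n + 2) div 3 \<in> ?F" using r by (metis image_eqI)
  qed
  then show ?thesis unfolding Gamma_S_def by (simp add: ceil3)
qed

end
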